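(* For every even $m\ge4$ and every $i\in[1..f_m]$, the Fibonacci word satisfies $\mathsf{F}_m[i]=\mathtt{a}$ if $(1+i\cdot f_{m-2})\bmod f_m\le f_{m-1}$, and $\mathsf{F}_m[i]=\mathtt{b}$ otherwise.
   Context: Fibonacci words: $\mathsf{F}_1=\mathtt{b}$, $\mathsf{F}_2=\mathtt{a}$, $\mathsf{F}_m=\mathsf{F}_{m-1}\mathsf{F}_{m-2}$ (concatenation) for $m\ge3$; $f_m=|\mathsf{F}_m|$. Strings are indexed from 1. For integers $x$ and $n\ge1$, $x\bmod n$ denotes the representative of $x$ modulo $n$ in $[1..n]$ (so a multiple of $n$ maps to $n$). *)

theory Defs
  imports Main
begin

datatype letter = a | b

text \<open>Fibonacci words: F_1 = b, F_2 = a, F_m = F_(m-1) F_(m-2) for m >= 3.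
  F_0 is not used; it is set to the empty word.\<close>
fun fibword :: "nat \<Rightarrow> letter list" where
  "fibword 0 = []"
| "fibword (Suc 0) = [b]"
| "fibword (Suc (Suc 0)) = [a]"
| "fibword (Suc (Suc (Suc k))) = fibword (Suc (Suc k)) @ fibword (Suc k)"

definition flen :: "nat \<Rightarrow> nat" where
  "flen m = length (fibword m)"

definition mod1 :: "int \<Rightarrow> int \<Rightarrow> int" where
  "mod1 x n = ((x - 1) mod n) + 1"

definition charAt :: "letter list \<Rightarrow> nat \<Rightarrow> letter" where
  "charAt w i = w ! (i - 1)"

end

theory Submission
  imports Defs
begin


lemma flen_rec: "flen (Suc (Suc n)) = flen (Suc n) + flen n"
  by (cases n) (auto simp: flen_def)

lemma flen_0[simp]: "flen 0 = 0" and flen_1[simp]: "flen 1 = 1" and flen_2[simp]: "flen 2 = 1"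
  by (auto simp: flen_def numeral_2_eq_2)

lemma flen_Suc_pos: "flen (Suc n) \<ge> 1"
proof (induction n)
  case 0 then show ?case by (simp add: flen_def)
next
  case (Suc n) then show ?case using flen_rec[of n] by simp
qed

lemma flen_pos: "n \<ge> 1 \<Longrightarrow> flen n \<ge> 1"
  using flen_Suc_pos[of "n - 1"] by simp

lemma cassini: "int (flen (n+2)) * int (flen n) - int (flen (n+1))^2 = - ((-1)^n)"
proof (induction n)
  case 0 then show ?case by (simp add: numeral_2_eq_2 flen_def)
next
  case (Suc n)
  have r1: "flen (n+3) = flen (n+2) + flen (n+1)" using flen_rec[of "n+1"] by (simp add: numeral_3_eq_3 numeral_2_eq_2)
  have r2: "flen (n+2) = flen (n+1) + flen n" using flen_rec[of n] by (simp add: numeral_2_eq_2)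
  show ?case using Suc r1 r2 by (simp add: power2_eq_square algebra_simps numeral_3_eq_3 numeral_2_eq_2)
qed



lemma A1:
  fixes N Q Q' N' t c d d' e :: int
  assumes N: "N > 0" and cas: "Q'*N - Q*N' = e"
    and par: "(e = 1 \<and> d = 0 \<and> d' = 1) \<or> (e = -1 \<and> d = 1 \<and> d' = 0)"
    and t1: "1 \<le> t" and t2: "t \<le> N + 1" and NN: "N + 1 \<le> N'"
    and l: "N*c \<le> t*Q - d" and u: "t*Q - d < N*(c+1)"
  shows "N'*c \<le> t*Q' - d' \<and> t*Q' - d' < N'*(c+1)"
proof -
  define r where "r = t*Q - N*c"
  define X where "X = t*Q' - d' - N'*c"
  have key: "N*X = N'*r + t*e - d'*N"
    unfolding X_def r_def by (subst cas[symmetric]) (simp add: algebra_simps)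
  have "0 \<le> N*X \<and> N*X < N*N'"
  proof (cases "e = 1")
    case True
    with par have e: "e = 1" "d = 0" "d' = 1" by auto
    have r0: "0 \<le> r" "r \<le> N - 1" using l u e unfolding r_def by (auto simp: algebra_simps)
    have lo: "0 \<le> N'*r + t - N"
    proof (cases "r = 0")
      case True
      have "t = N*(t*Q' - c*N')"
        using cas e True unfolding r_def
        by algebra
      then have "N dvd t" by (metis dvd_triv_left)
      then have "N \<le> t" using t1 by (simp add: zdvd_imp_le)
      then show ?thesis using True by simp
    next
      case False
      then have "N' \<le> N'*r" using r0 NN by simp
      then show ?thesis using NN t1 by linarith
    qed
    have "N'*r \<le> N'*(N-1)" using r0 NN by (intro mult_left_mono) auto
    then have hi: "N'*r + t - N < N*N'" using t2 NN N by (simp add: algebra_simps)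
    show ?thesis using key lo hi e by simp
  next
    case False
    with par have e: "e = -1" "d = 1" "d' = 0" by auto
    have r0: "1 \<le> r" "r \<le> N" using l u e unfolding r_def by (auto simp: algebra_simps)
    have "N' \<le> N'*r" using r0 NN by simp
    then have lo: "0 \<le> N'*r - t" using NN t2 by linarith
    have "N'*r \<le> N'*N" using r0 NN by (intro mult_left_mono) auto
    then have hi: "N'*r - t < N*N'" using t1 by (simp add: algebra_simps)
    show ?thesis using key lo hi e by simp
  qed
  then have "0 \<le> X" "X < N'" using N
    by (auto simp: zero_le_mult_iff mult_less_cancel_left)
  then show ?thesis unfolding X_def by (simp add: algebra_simps)
qed

lemma A2:
  fixes N Q Q' N' Q'' u c2 d d' e :: int
  assumes Qp: "Q' > 0" and cas1: "N*Q' - Q*N' = e" and cas2: "Q'*Q' - Q''*N' = - e"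
    and par: "(e = 1 \<and> d = 0 \<and> d' = 1) \<or> (e = -1 \<and> d = 1 \<and> d' = 0)"
    and u1: "1 \<le> u" and u2: "u \<le> Q' + 1" and NN: "Q' + 1 \<le> N'"
    and l: "Q'*c2 \<le> u*Q'' - d'" and h: "u*Q'' - d' < Q'*(c2+1)"
  shows "N'*(Q+c2) \<le> (N+u)*Q' - d' \<and> (N+u)*Q' - d' < N'*(Q+c2+1)"
proof -
  define r where "r = u*Q'' - Q'*c2"
  define Y where "Y = u*Q' - d - N'*c2"
  have key: "Q'*Y = N'*r - u*e - d*Q'"
    unfolding Y_def r_def using cas2 by algebra
  have "0 \<le> Q'*Y \<and> Q'*Y < Q'*N'"
  proof (cases "e = 1")
    case True
    with par have e: "e = 1" "d = 0" "d' = 1" by auto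
    have r0: "1 \<le> r" "r \<le> Q'" using l h e unfolding r_def by (auto simp: algebra_simps)
    have "N' \<le> N'*r" using r0 NN by simp
    then have lo: "0 \<le> N'*r - u" using NN u2 by linarith
    have "N'*r \<le> N'*Q'" using r0 NN by (intro mult_left_mono) auto
    then have hi: "N'*r - u < Q'*N'" using u1 by (simp add: algebra_simps)
    show ?thesis using key lo hi e by simp
  next
    case False
    with par have e: "e = -1" "d = 1" "d' = 0" by auto
    have r0: "0 \<le> r" "r \<le> Q' - 1" using l h e unfolding r_def by (auto simp: algebra_simps)
    have lo: "0 \<le> N'*r + u - Q'"
    proof (cases "r = 0")
      case True
      have "u = Q'*(u*Q' - c2*N')"
        using cas2 e True unfolding r_def
        by algebra
      then have "Q' dvd u" by (metis dvd_triv_left)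
      then have "Q' \<le> u" using u1 by (simp add: zdvd_imp_le)
      then show ?thesis using True by simp
    next
      case False
      then have "N' \<le> N'*r" using r0 NN by simp
      then show ?thesis using NN u1 by linarith
    qed
    have "N'*r \<le> N'*(Q'-1)" using r0 NN by (intro mult_left_mono) auto
    then have hi: "N'*r + u - Q' < Q'*N'" using u2 NN Qp by (simp add: algebra_simps)
    show ?thesis using key lo hi e by simp
  qed
  then have "0 \<le> Y" "Y < N'" using Qp
    by (auto simp: zero_le_mult_iff mult_less_cancel_left)
  moreover have "(N+u)*Q' - d' - N'*(Q+c2) = Y"
    unfolding Y_def using cas1 par by (auto simp: algebra_simps)
  ultimately show ?thesis by (simp add: algebra_simps)
qed



definition nb :: "letter list \<Rightarrow> nat" where "nb w = length (filter (\<lambda>x. x = b) w)"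
definition dd :: "nat \<Rightarrow> int" where "dd m = (if even m then 0 else 1)"
definition ee :: "nat \<Rightarrow> int" where "ee m = (if even m then 1 else -1)"

definition P :: "nat \<Rightarrow> nat \<Rightarrow> bool" where
  "P m k \<longleftrightarrow> int (flen m) * int (nb (take k (fibword m))) \<le> int (k+1) * int (flen (m-2)) - dd m
     \<and> int (k+1) * int (flen (m-2)) - dd m < int (flen m) * (int (nb (take k (fibword m))) + 1)"

lemma fibword_step: "fibword (n+3) = fibword (n+2) @ fibword (n+1)"
  by (simp add: eval_nat_numeral)

lemma flen_step: "flen (n+2) = flen (n+1) + flen n"
  using flen_rec[of n] by simp

lemma nb_app: "nb (x @ y) = nb x + nb y" by (simp add: nb_def)

lemma nb_fib: "nb (fibword (k+2)) = flen k"
proof (induction k rule: less_induct)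
  case (less k)
  show ?case
  proof (cases k)
    case 0 then show ?thesis by (simp add: nb_def)
  next
    case (Suc j)
    show ?thesis
    proof (cases j)
      case 0 then show ?thesis using Suc by (simp add: nb_def flen_def eval_nat_numeral)
    next
      case (Suc l)
      have "fibword (k+2) = fibword (Suc (Suc (Suc l))) @ fibword (Suc (Suc l))" using Suc \<open>k = Suc j\<close> by simp
      then have "nb (fibword (k+2)) = flen (l+1) + flen l"
        using less[of "l+1"] less[of l] Suc \<open>k = Suc j\<close> by (simp add: nb_app)
      then show ?thesis using flen_step[of l] Suc \<open>k = Suc j\<close> by simp
    qed
  qed
qed

lemma dd34: "dd 3 = 1" "dd 4 = 0" by (simp_all add: dd_def)

lemma base3: "k \<le> flen 3 \<Longrightarrow> P 3 k"
proof -
  assume "k \<le> flen 3"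
  then have "k \<le> 2" by (simp add: flen_def eval_nat_numeral)
  then have "k = 0 \<or> k = 1 \<or> k = 2" by auto
  then show ?thesis
    unfolding P_def dd34 by (auto simp: flen_def nb_def eval_nat_numeral)
qed

lemma base4: "k \<le> flen 4 \<Longrightarrow> P 4 k"
proof -
  assume "k \<le> flen 4"
  then have "k \<le> 3" by (simp add: flen_def eval_nat_numeral)
  then have "k = 0 \<or> k = 1 \<or> k = 2 \<or> k = 3" by auto
  then show ?thesis
    unfolding P_def dd34 by (auto simp: flen_def nb_def eval_nat_numeral)
qed

lemma cas_facts:
  fixes n :: nat
  defines "N \<equiv> int (flen (n+3))" and "Q \<equiv> int (flen (n+1))" and "Q' \<equiv> int (flen (n+2))"
    and "Q'' \<equiv> int (flen n)" and "N' \<equiv> int (flen (n+4))"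
  shows "Q'*N - Q*N' = ee (n+3)" and "Q'*Q' - Q''*N' = - ee (n+3)"
proof -
  have c: "int (flen (n+3)) * int (flen (n+1)) - int (flen (n+2))^2 = - ((-1)^(n+1))"
    using cassini[of "n+1"] by (simp add: eval_nat_numeral add.commute)
  have r1: "N = Q' + Q" unfolding N_def Q'_def Q_def using flen_step[of "n+1"] by (simp add: eval_nat_numeral add.commute)
  have r2: "N' = N + Q'" unfolding N_def N'_def Q'_def using flen_step[of "n+2"] by (simp add: eval_nat_numeral add.commute)
  have r3: "Q' = Q + Q''" unfolding Q''_def Q'_def Q_def using flen_step[of "n"] by (simp add: eval_nat_numeral add.commute)
  have c': "N*Q - Q'*Q' = (-1)^n" using c unfolding N_def Q_def Q'_def by (simp add: power2_eq_square)
  have e: "ee (n+3) = - ((-1)^n)" by (simp add: ee_def)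
  show "Q'*N - Q*N' = ee (n+3)" unfolding e using c' r1 r2 by (simp add: algebra_simps)
  show "Q'*Q' - Q''*N' = - ee (n+3)" unfolding e using c' r1 r2 r3 by (simp add: algebra_simps)
qed



lemma step:
  assumes n: "n \<ge> 1" and IH1: "\<And>k. k \<le> flen (n+3) \<Longrightarrow> P (n+3) k"
    and IH2: "\<And>k. k \<le> flen (n+2) \<Longrightarrow> P (n+2) k"
    and k: "k \<le> flen (n+4)"
  shows "P (n+4) k"
proof -
  define N where "N = int (flen (n+3))"
  define Q where "Q = int (flen (n+1))"
  define Q' where "Q' = int (flen (n+2))"
  define Q'' where "Q'' = int (flen n)"
  define N' where "N' = int (flen (n+4))"
  have cas1: "Q'*N - Q*N' = ee (n+3)" and cas2: "Q'*Q' - Q''*N' = - ee (n+3)"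
    unfolding N_def Q_def Q'_def Q''_def N'_def by (rule cas_facts)+
  have par: "(ee (n+3) = 1 \<and> dd (n+3) = 0 \<and> dd (n+4) = 1) \<or> (ee (n+3) = -1 \<and> dd (n+3) = 1 \<and> dd (n+4) = 0)"
    by (simp add: ee_def dd_def)
  have dd2: "dd (n+2) = dd (n+4)" by (simp add: dd_def)
  have rN': "N' = N + Q'" unfolding N_def N'_def Q'_def using flen_step[of "n+2"] by (simp add: eval_nat_numeral add.commute)
  have Q'pos: "Q' \<ge> 1" unfolding Q'_def using flen_pos[of "n+2"] by simp
  have Npos: "N \<ge> 1" unfolding N_def using flen_pos[of "n+3"] by simp
  have Q''pos: "Q'' \<ge> 1" unfolding Q''_def using flen_pos[of n] n by simp
  have rN: "N = Q' + Q" unfolding N_def Q'_def Q_def using flen_step[of "n+1"] by (simp add: eval_nat_numeral add.commute)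
  have rQ': "Q' = Q + Q''" unfolding Q''_def Q'_def Q_def using flen_step[of "n"] by (simp add: eval_nat_numeral add.commute)
  have fw: "fibword (n+4) = fibword (n+3) @ fibword (n+2)" using fibword_step[of "n+1"] by (simp add: eval_nat_numeral)
  have m2: "n + 4 - 2 = n + 2" "n + 3 - 2 = n + 1" "n + 2 - 2 = n" by simp_all
  show ?thesis
  proof (cases "k \<le> flen (n+3)")
    case True
    have tk: "take k (fibword (n+4)) = take k (fibword (n+3))" using True fw
      by (simp add: flen_def)
    define c where "c = int (nb (take k (fibword (n+3))))"
    from IH1[OF True] have h: "N*c \<le> int (k+1)*Q - dd (n+3)" "int (k+1)*Q - dd (n+3) < N*(c+1)"
      unfolding P_def N_def Q_def c_def m2 by simp_all
    have "N'*c \<le> int (k+1)*Q' - dd (n+4) \<and> int (k+1)*Q' - dd (n+4) < N'*(c+1)"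
      by (rule A1[OF _ cas1 par _ _ _ h]) (use True Npos Q'pos rN' in \<open>auto simp: N_def\<close>)
    then show ?thesis unfolding P_def tk m2 by (simp add: N'_def Q'_def c_def)
  next
    case False
    define j where "j = k - flen (n+3)"
    have kj: "k = flen (n+3) + j" using False j_def by simp
    have jle: "j \<le> flen (n+2)" using k kj flen_step[of "n+2"] by (simp add: eval_nat_numeral add.commute)
    have tk: "take k (fibword (n+4)) = fibword (n+3) @ take j (fibword (n+2))" using kj fw
      by (simp add: flen_def)
    have e3: "n+3 = (n+1)+2" by simp
    have nbF: "nb (fibword (n+3)) = flen (n+1)" unfolding e3 by (rule nb_fib)
    define c2 where "c2 = int (nb (take j (fibword (n+2))))"
    from IH2[OF jle] have h: "Q'*c2 \<le> int (j+1)*Q'' - dd (n+4)" "int (j+1)*Q'' - dd (n+4) < Q'*(c2+1)"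
      unfolding P_def Q'_def Q''_def c2_def m2 dd2 by simp_all
    have cas1': "N*Q' - Q*N' = ee (n+3)" using cas1 by (simp add: mult.commute)
    have "N'*(Q+c2) \<le> (N+int (j+1))*Q' - dd (n+4) \<and> (N+int (j+1))*Q' - dd (n+4) < N'*(Q+c2+1)"
      by (rule A2[OF _ cas1' cas2 par _ _ _ h]) (use jle Q'pos rN' Npos in \<open>auto simp: Q'_def\<close>)
    moreover have A: "int (k+1) = N + int (j+1)" using kj N_def by simp
    moreover have B: "int (nb (take k (fibword (n+4)))) = Q + c2" using tk nbF
      by (simp add: nb_app Q_def c2_def)
    ultimately show ?thesis unfolding P_def m2 A B N'_def[symmetric] Q'_def[symmetric] by simp
  qed
qed

lemma key: "m \<ge> 3 \<Longrightarrow> k \<le> flen m \<Longrightarrow> P m k"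
proof (induction m arbitrary: k rule: less_induct)
  case (less m)
  show ?case
  proof (cases "m = 3 \<or> m = 4")
    case True then show ?thesis using base3 base4 less.prems by auto
  next
    case False
    define n where "n = m - 4"
    have mn: "m = n + 4" "n \<ge> 1" using False less.prems unfolding n_def by auto
    have i1: "\<And>k. k \<le> flen (n+3) \<Longrightarrow> P (n+3) k" using less.IH[of "n+3"] mn by simp
    have i2: "\<And>k. k \<le> flen (n+2) \<Longrightarrow> P (n+2) k" using less.IH[of "n+2"] mn by simp
    show ?thesis unfolding mn(1)
      using step[OF mn(2) i1 i2] less.prems(2) mn(1) by simp
  qed
qed



theorem mainTheorem16:
  fixes m i :: nat
  assumes "even m" and "m \<ge> 4" and "1 \<le> i" and "i \<le> flen m"
  shows "charAt (fibword m) i =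
           (if mod1 (1 + int i * int (flen (m - 2))) (int (flen m)) \<le> int (flen (m - 1))
            then a else b)"
proof -
  define F where "F = fibword m"
  define N where "N = int (flen m)"
  define Q where "Q = int (flen (m-2))"
  define p where "p = int (flen (m-1))"
  have Np: "N = p + Q"
  proof -
    define k where "k = m - 2"
    have mk: "m = Suc (Suc k)" "m - 1 = Suc k" "m - 2 = k" using assms(2) unfolding k_def by auto
    show ?thesis unfolding N_def p_def Q_def mk using flen_rec[of k] by simp
  qed
  have d0: "dd m = 0" using assms(1) by (simp add: dd_def)
  define c1 where "c1 = int (nb (take i F))"
  define c0 where "c0 = int (nb (take (i-1) F))"
  have P1: "P m i" using key assms by simp
  have P0: "P m (i-1)" using key assms by simp
  have ii: "int (i - 1 + 1) = int i" using assms(3) by simp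
  from P1 have h1: "N*c1 \<le> int (i+1)*Q" "int (i+1)*Q < N*(c1+1)"
    unfolding P_def d0 N_def Q_def c1_def F_def by simp_all
  from P0 have h0: "N*c0 \<le> int i*Q" "int i*Q < N*(c0+1)"
    unfolding P_def d0 N_def Q_def c0_def F_def ii by simp_all
  have len: "i - 1 < length F" using assms(3,4) by (simp add: F_def flen_def)
  have tk: "take i F = take (i-1) F @ [F!(i-1)]"
    using take_Suc_conv_app_nth[OF len] assms(3) by simp
  have cc: "c1 = c0 + (if F!(i-1) = b then 1 else 0)"
    unfolding c1_def c0_def tk by (simp add: nb_app nb_def)
  define r where "r = int i * Q - N*c0"
  have r0: "0 \<le> r" "r < N" using h0 unfolding r_def by (simp_all add: algebra_simps)
  have "int i * Q = r + N*c0" unfolding r_def by simp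
  then have md: "mod1 (1 + int i * Q) N = r + 1" unfolding mod1_def using r0 by simp
  have e1: "int (i+1)*Q = int i * Q + Q" by (simp add: algebra_simps)
  have e2: "N*(c1+1) = N*c1 + N" "N*(c0+1) = N*c0 + N" by (simp_all add: algebra_simps)
  have "F!(i-1) = (if r + 1 \<le> p then a else b)"
  proof (cases "F!(i-1)")
    case a
    then have "c1 = c0" using cc by simp
    then have "r + 1 \<le> p" using h1 e1 e2 Np unfolding r_def by simp
    then show ?thesis using a by simp
  next
    case b
    then have "c1 = c0 + 1" using cc by simp
    then have "N*c1 = N*c0 + N" by (simp add: algebra_simps)
    then have "\<not> r + 1 \<le> p" using h1 e1 Np unfolding r_def by simp
    then show ?thesis using b by simp
  qed
  then show ?thesis using md unfolding charAt_def F_def N_def Q_def p_def by simp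
qed


end
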